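(* Let $L,K,M$ be positive integers, $0<\tau_p<\tau_c$, $\beta_{i,k}>0$, $p_k>0$, $\sigma_{\mathrm{UL}}^2>0$, $\sigma_{\mathrm{DL}}^2>0$, $P_{\max,i}>0$, and $\xi_k>0$, with $\hat\xi_k=2^{\xi_k\tau_c/(\tau_c-\tau_p)}-1$. Define $c_{i,k}=\beta_{i,k}$ and $b_{i,t}=\frac{Mp_t\tau_p\beta_{i,t}^2}{\hat\xi_t(p_t\tau_p\beta_{i,t}+\sigma_{\mathrm{UL}}^2)}$, and consider the linear program in the variables $\rho_{i,t}\ge0$ ($i=1,\dots,L$, $t=1,\dots,K$): $$\min\ \sum_{t=1}^K\sum_{i=1}^L\rho_{i,t}\quad\text{s.t.}\quad \sum_{t=1}^K\sum_{i=1}^L c_{i,k}\rho_{i,t}-\sum_{i=1}^L b_{i,k}\rho_{i,k}+\sigma_{\mathrm{DL}}^2\le0\ \ \forall k,\qquad \sum_{t=1}^K\rho_{i,t}\le P_{\max,i}\ \ \forall i,$$ with Lagrangian $\mathcal{L}=\sum_{t,i}\rho_{i,t}+\sum_{k}\lambda_k\big(\sum_{t,i}c_{i,k}\rho_{i,t}-\sum_i b_{i,k}\rho_{i,k}+\sigma_{\mathrm{DL}}^2\big)+\sum_i\mu_i\big(\sum_t\rho_{i,t}-P_{\max,i}\big)$, $\lambda_k\ge0$, $\mu_i\ge0$. Assume the program is feasible, let $\{\check\rho_{i,t}\}$ be an optimal solution and $\{\check\lambda_k,\check\mu_i\}$ optimal Lagrange multipliers. Then each user $t$ is served only by base stations with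 indices in $$\mathcal{S}_t=\underset{i\in\{1,\dots,L\}}{\mathrm{argmin}}\ \left(1+\sum_{k=1}^K\check\lambda_kc_{i,k}+\check\mu_i\right)\frac{1}{b_{i,t}},$$ i.e., $\check\rho_{i,t}>0$ implies $i\in\mathcal{S}_t$. In particular, user $t$ is served by one base station if $\mathcal{S}_t$ contains only one index, and by a subset of base stations (contained in $\mathcal{S}_t$) if $\mathcal{S}_t$ contains several indices.
   Context: The linear program is the total downlink transmit power minimization for a Massive MIMO system with $L$ base stations (BSs) of $M$ antennas, $K$ single-antenna users, MRT precoding and non-coherent joint transmission; $\rho_{i,t}$ is the power BS $i$ allocates to user $t$, and user $t$ is associated with (served by) BS $i$ if and only if $\rho_{i,t}\ne0$. The first constraint family encodes that user $k$'s spectral efficiency is at least $\xi_k$, the second the per-BS peak power $P_{\max,i}$. *)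

theory Defs
  imports Complex_Main "HOL-Library.Extended_Real"
begin

text \<open>Indices: base stations i < L, users t,k < K (0-based). Power allocations
  are functions rho :: nat => nat => real, rho i t; only entries with i < L, t < K matter.\<close>

definition xi_hat :: "real \<Rightarrow> real \<Rightarrow> real \<Rightarrow> real" where
  "xi_hat tau_c tau_p xi = 2 powr (xi * tau_c / (tau_c - tau_p)) - 1"

definition coef_b :: "nat \<Rightarrow> real \<Rightarrow> (nat \<Rightarrow> real) \<Rightarrow> real \<Rightarrow> real \<Rightarrow> (nat \<Rightarrow> real)
    \<Rightarrow> (nat \<Rightarrow> nat \<Rightarrow> real) \<Rightarrow> nat \<Rightarrow> nat \<Rightarrow> real" where
  "coef_b M tau_p p tau_c sUL xi beta i t =
     real M * p t * tau_p * (beta i t)\<^sup>2 /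
       (xi_hat tau_c tau_p (xi t) * (p t * tau_p * beta i t + sUL))"

definition objective :: "nat \<Rightarrow> nat \<Rightarrow> (nat \<Rightarrow> nat \<Rightarrow> real) \<Rightarrow> real" where
  "objective L K rho = (\<Sum>t<K. \<Sum>i<L. rho i t)"

definition se_constr :: "nat \<Rightarrow> nat \<Rightarrow> (nat \<Rightarrow> nat \<Rightarrow> real) \<Rightarrow> (nat \<Rightarrow> nat \<Rightarrow> real)
    \<Rightarrow> real \<Rightarrow> (nat \<Rightarrow> nat \<Rightarrow> real) \<Rightarrow> nat \<Rightarrow> real" where
  "se_constr L K c b sDL rho k =
     (\<Sum>t<K. \<Sum>i<L. c i k * rho i t) - (\<Sum>i<L. b i k * rho i k) + sDL"

definition pow_constr :: "nat \<Rightarrow> (nat \<Rightarrow> real) \<Rightarrow> (nat \<Rightarrow> nat \<Rightarrow> real) \<Rightarrow> nat \<Rightarrow> real" where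
  "pow_constr K Pmax rho i = (\<Sum>t<K. rho i t) - Pmax i"

definition feasible :: "nat \<Rightarrow> nat \<Rightarrow> (nat \<Rightarrow> nat \<Rightarrow> real) \<Rightarrow> (nat \<Rightarrow> nat \<Rightarrow> real)
    \<Rightarrow> real \<Rightarrow> (nat \<Rightarrow> real) \<Rightarrow> (nat \<Rightarrow> nat \<Rightarrow> real) \<Rightarrow> bool" where
  "feasible L K c b sDL Pmax rho \<longleftrightarrow>
     (\<forall>i<L. \<forall>t<K. rho i t \<ge> 0) \<and>
     (\<forall>k<K. se_constr L K c b sDL rho k \<le> 0) \<and>
     (\<forall>i<L. pow_constr K Pmax rho i \<le> 0)"

definition optimal_solution :: "nat \<Rightarrow> nat \<Rightarrow> (nat \<Rightarrow> nat \<Rightarrow> real) \<Rightarrow> (nat \<Rightarrow> nat \<Rightarrow> real)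
    \<Rightarrow> real \<Rightarrow> (nat \<Rightarrow> real) \<Rightarrow> (nat \<Rightarrow> nat \<Rightarrow> real) \<Rightarrow> bool" where
  "optimal_solution L K c b sDL Pmax rho \<longleftrightarrow>
     feasible L K c b sDL Pmax rho \<and>
     (\<forall>rho'. feasible L K c b sDL Pmax rho' \<longrightarrow> objective L K rho \<le> objective L K rho')"

definition lagrangian :: "nat \<Rightarrow> nat \<Rightarrow> (nat \<Rightarrow> nat \<Rightarrow> real) \<Rightarrow> (nat \<Rightarrow> nat \<Rightarrow> real)
    \<Rightarrow> real \<Rightarrow> (nat \<Rightarrow> real) \<Rightarrow> (nat \<Rightarrow> nat \<Rightarrow> real) \<Rightarrow> (nat \<Rightarrow> real) \<Rightarrow> (nat \<Rightarrow> real) \<Rightarrow> real" where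
  "lagrangian L K c b sDL Pmax rho lam mu =
     objective L K rho + (\<Sum>k<K. lam k * se_constr L K c b sDL rho k)
       + (\<Sum>i<L. mu i * pow_constr K Pmax rho i)"

text \<open>Lagrange dual function: infimum of the Lagrangian over the domain rho \<ge> 0
  (extended reals, since it may be -\<infinity>).\<close>

definition dual_fun :: "nat \<Rightarrow> nat \<Rightarrow> (nat \<Rightarrow> nat \<Rightarrow> real) \<Rightarrow> (nat \<Rightarrow> nat \<Rightarrow> real)
    \<Rightarrow> real \<Rightarrow> (nat \<Rightarrow> real) \<Rightarrow> (nat \<Rightarrow> real) \<Rightarrow> (nat \<Rightarrow> real) \<Rightarrow> ereal" where
  "dual_fun L K c b sDL Pmax lam mu =
     (INF rho \<in> {rho. \<forall>i<L. \<forall>t<K. rho i t \<ge> 0}. ereal (lagrangian L K c b sDL Pmax rho lam mu))"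

definition optimal_multipliers :: "nat \<Rightarrow> nat \<Rightarrow> (nat \<Rightarrow> nat \<Rightarrow> real) \<Rightarrow> (nat \<Rightarrow> nat \<Rightarrow> real)
    \<Rightarrow> real \<Rightarrow> (nat \<Rightarrow> real) \<Rightarrow> (nat \<Rightarrow> real) \<Rightarrow> (nat \<Rightarrow> real) \<Rightarrow> bool" where
  "optimal_multipliers L K c b sDL Pmax lam mu \<longleftrightarrow>
     (\<forall>k<K. lam k \<ge> 0) \<and> (\<forall>i<L. mu i \<ge> 0) \<and>
     (\<forall>lam' mu'. (\<forall>k<K. lam' k \<ge> 0) \<longrightarrow> (\<forall>i<L. mu' i \<ge> 0) \<longrightarrow>
        dual_fun L K c b sDL Pmax lam' mu' \<le> dual_fun L K c b sDL Pmax lam mu)"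

definition S_set :: "nat \<Rightarrow> nat \<Rightarrow> (nat \<Rightarrow> nat \<Rightarrow> real) \<Rightarrow> (nat \<Rightarrow> nat \<Rightarrow> real)
    \<Rightarrow> (nat \<Rightarrow> real) \<Rightarrow> (nat \<Rightarrow> real) \<Rightarrow> nat \<Rightarrow> nat set" where
  "S_set L K c b lam mu t =
     (let f = (\<lambda>i. (1 + (\<Sum>k<K. lam k * c i k) + mu i) * (1 / b i t))
      in {i. i < L \<and> (\<forall>j<L. f i \<le> f j)})"

end

theory Submission
  imports Defs
begin

definition cf :: "nat \<Rightarrow> (nat \<Rightarrow> nat \<Rightarrow> real) \<Rightarrow> (nat \<Rightarrow> nat \<Rightarrow> real) \<Rightarrow> (nat \<Rightarrow> real) \<Rightarrow> (nat \<Rightarrow> real) \<Rightarrow> nat \<Rightarrow> nat \<Rightarrow> real" where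
  "cf K c b lam mu i t = 1 + (\<Sum>k<K. lam k * c i k) + mu i - lam t * b i t"

lemma lagr_affine:
  "lagrangian L K c b sDL Pmax r lam mu =
     (\<Sum>k<K. lam k * sDL) - (\<Sum>i<L. mu i * Pmax i) + (\<Sum>t<K. \<Sum>i<L. cf K c b lam mu i t * r i t)"
proof -
  have A: "(\<Sum>k<K. lam k * (\<Sum>t<K. \<Sum>i<L. c i k * r i t)) = (\<Sum>t<K. \<Sum>i<L. (\<Sum>k<K. lam k * c i k) * r i t)"
  proof -
    have "(\<Sum>k<K. lam k * (\<Sum>t<K. \<Sum>i<L. c i k * r i t)) = (\<Sum>k<K. \<Sum>t<K. \<Sum>i<L. lam k * c i k * r i t)"
      by (simp add: sum_distrib_left mult.assoc)
    also have "\<dots> = (\<Sum>t<K. \<Sum>k<K. \<Sum>i<L. lam k * c i k * r i t)" by (rule sum.swap)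
    also have "\<dots> = (\<Sum>t<K. \<Sum>i<L. \<Sum>k<K. lam k * c i k * r i t)" by (rule sum.cong[OF refl], rule sum.swap)
    also have "\<dots> = (\<Sum>t<K. \<Sum>i<L. (\<Sum>k<K. lam k * c i k) * r i t)" by (simp add: sum_distrib_right)
    finally show ?thesis .
  qed
  have B: "(\<Sum>k<K. lam k * (\<Sum>i<L. b i k * r i k)) = (\<Sum>t<K. \<Sum>i<L. lam t * b i t * r i t)"
    by (simp add: sum_distrib_left mult.assoc)
  have C: "(\<Sum>i<L. mu i * ((\<Sum>t<K. r i t) - Pmax i)) = (\<Sum>t<K. \<Sum>i<L. mu i * r i t) - (\<Sum>i<L. mu i * Pmax i)"
  proof -
    have C1: "(\<Sum>i<L. mu i * ((\<Sum>t<K. r i t) - Pmax i)) = (\<Sum>i<L. \<Sum>t<K. mu i * r i t) - (\<Sum>i<L. mu i * Pmax i)"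
      by (simp add: right_diff_distrib sum_subtractf sum_distrib_left)
    show ?thesis using C1 sum.swap[of "\<lambda>i t. mu i * r i t" "{..<K}" "{..<L}"] by simp
  qed
  have D: "(\<Sum>k<K. lam k * se_constr L K c b sDL r k) =
     (\<Sum>t<K. \<Sum>i<L. (\<Sum>k<K. lam k * c i k) * r i t) - (\<Sum>t<K. \<Sum>i<L. lam t * b i t * r i t) + (\<Sum>k<K. lam k * sDL)"
    unfolding se_constr_def A[symmetric] B[symmetric]
    by (simp add: ring_distribs sum.distrib sum_subtractf)
  show ?thesis
    unfolding lagrangian_def D pow_constr_def C objective_def cf_def
    by (simp add: ring_distribs sum.distrib sum_subtractf algebra_simps)
qed

lemma update_sum:
  fixes f r :: "nat \<Rightarrow> nat \<Rightarrow> real" and s :: real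
  assumes "j < L" "t0 < K"
  shows "(\<Sum>t<K. \<Sum>i<L. f i t * (if i = j \<and> t = t0 then r i t + s else r i t)) =
         (\<Sum>t<K. \<Sum>i<L. f i t * r i t) + s * f j t0"
proof -
  have "(\<Sum>t<K. \<Sum>i<L. f i t * (if i = j \<and> t = t0 then r i t + s else r i t)) =
        (\<Sum>t<K. \<Sum>i<L. f i t * r i t + (if i = j \<and> t = t0 then s * f j t0 else 0))"
    by (intro sum.cong refl) (auto simp: algebra_simps)
  also have "\<dots> = (\<Sum>t<K. \<Sum>i<L. f i t * r i t) + (\<Sum>t<K. \<Sum>i<L. (if i = j \<and> t = t0 then s * f j t0 else 0))"
    by (simp add: sum.distrib)
  also have "(\<Sum>t<K. \<Sum>i<L. (if i = j \<and> t = t0 then s * f j t0 else 0)) = (\<Sum>t<K. if t = t0 then s * f j t0 else 0)"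
    by (intro sum.cong refl) (use assms in \<open>auto simp: sum.delta\<close>)
  also have "\<dots> = s * f j t0" using assms by (simp add: sum.delta)
  finally show ?thesis .
qed

definition lin :: "('v \<Rightarrow> real \<Rightarrow> 'v \<Rightarrow> 'v) \<Rightarrow> ('v \<Rightarrow> real) \<Rightarrow> bool" where
  "lin comb f \<longleftrightarrow> (\<forall>x y s. f (comb x s y) = f x + s * f y)"

lemma farkas_gen:
  assumes "finite J"
  shows "(\<forall>j\<in>J. lin comb (a j)) \<Longrightarrow> lin comb c \<Longrightarrow>
    (\<forall>x. (\<forall>j\<in>J. a j x \<ge> 0) \<longrightarrow> c x \<ge> 0) \<Longrightarrow>
    \<exists>l. (\<forall>j\<in>J. l j \<ge> 0) \<and> (\<forall>x. c x = (\<Sum>j\<in>J. l j * a j x))"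
  using assms
proof (induction J arbitrary: a c rule: finite_induct)
  case empty
  have "c x = 0" for x
  proof -
    have "c (comb x (-2) x) = c x + (-2) * c x" using empty(2) by (simp add: lin_def)
    moreover have "c (comb x (-2) x) \<ge> 0" "c x \<ge> 0" using empty(3) by auto
    ultimately show ?thesis by linarith
  qed
  then show ?case by auto
next
  case (insert j0 J)
  show ?case
  proof (cases "\<forall>x. (\<forall>j\<in>J. a j x \<ge> 0) \<longrightarrow> c x \<ge> 0")
    case True
    then obtain l where l: "\<forall>j\<in>J. l j \<ge> 0" "\<forall>x. c x = (\<Sum>j\<in>J. l j * a j x)"
      using insert.IH[of a c] insert.prems True by blast
    have eq: "(\<Sum>j\<in>J. (l(j0:=0)) j * a j x) = (\<Sum>j\<in>J. l j * a j x)" for x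
      by (rule sum.cong) (use insert.hyps in auto)
    show ?thesis
      apply (rule exI[of _ "l(j0:=0)"])
      using l insert.hyps eq by auto
  next
    case False
    then obtain xb where xb: "\<forall>j\<in>J. a j xb \<ge> 0" "c xb < 0" by auto
    define d where "d = a j0 xb"
    have dneg: "d < 0"
    proof (rule ccontr)
      assume "\<not> d < 0"
      then have "\<forall>j\<in>insert j0 J. a j xb \<ge> 0" using xb d_def by auto
      then show False using insert.prems(3) xb by force
    qed
    define a' where "a' = (\<lambda>j x. a j x - (a j xb / d) * a j0 x)"
    define c' where "c' = (\<lambda>x. c x - (c xb / d) * a j0 x)"
    have lj0: "lin comb (a j0)" using insert.prems by auto
    have la': "\<forall>j\<in>J. lin comb (a' j)"
    proof
      fix j assume "j \<in> J"
      then have "lin comb (a j)" using insert.prems by auto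
      then show "lin comb (a' j)" using lj0 unfolding lin_def a'_def by (simp add: algebra_simps)
    qed
    have lc': "lin comb c'" using lj0 insert.prems(2) unfolding lin_def c'_def by (simp add: algebra_simps)
    have imp: "\<forall>x. (\<forall>j\<in>J. a' j x \<ge> 0) \<longrightarrow> c' x \<ge> 0"
    proof (intro allI impI)
      fix x assume H: "\<forall>j\<in>J. a' j x \<ge> 0"
      define y where "y = comb x (-(a j0 x / d)) xb"
      have "a j y = a' j x" if "j \<in> J" for j
        using insert.prems(1) that unfolding y_def a'_def lin_def by (simp add: algebra_simps)
      moreover have "a j0 y = 0" using lj0 dneg unfolding y_def lin_def d_def by simp
      ultimately have "\<forall>j\<in>insert j0 J. a j y \<ge> 0" using H by auto
      then have "c y \<ge> 0" using insert.prems(3) by blast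
      moreover have "c y = c' x" using insert.prems(2) unfolding y_def c'_def lin_def
        by (simp add: algebra_simps)
      ultimately show "c' x \<ge> 0" by simp
    qed
    obtain m where m: "\<forall>j\<in>J. m j \<ge> 0" "\<forall>x. c' x = (\<Sum>j\<in>J. m j * a' j x)"
      using insert.IH[OF la' lc' imp] by blast
    define S where "S = (\<Sum>j\<in>J. m j * a j xb)"
    have S0: "S \<ge> 0" unfolding S_def using m(1) xb(1) by (auto intro!: sum_nonneg)
    define l where "l = m(j0 := (c xb - S) / d)"
    have lpos: "l j0 \<ge> 0" unfolding l_def using S0 xb(2) dneg
      by (simp add: divide_nonpos_neg)
    have "c x = (\<Sum>j\<in>insert j0 J. l j * a j x)" for x
    proof -
      have e1: "(\<Sum>j\<in>J. l j * a j x) = (\<Sum>j\<in>J. m j * a j x)"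
        by (rule sum.cong) (use insert.hyps in \<open>auto simp: l_def\<close>)
      have "c' x = (\<Sum>j\<in>J. m j * a j x - (m j * a j xb) * (a j0 x / d))"
        using m(2) unfolding a'_def by (simp add: algebra_simps)
      also have "\<dots> = (\<Sum>j\<in>J. m j * a j x) - S * (a j0 x / d)"
        by (simp only: S_def sum_subtractf sum_distrib_right)
      finally have "c x = (\<Sum>j\<in>J. m j * a j x) - S * (a j0 x / d) + (c xb / d) * a j0 x"
        unfolding c'_def by simp
      also have "\<dots> = (\<Sum>j\<in>J. m j * a j x) + l j0 * a j0 x"
      proof -
        have "l j0 = (c xb - S) / d" by (simp add: l_def)
        moreover have "((c xb - S) / d) * a j0 x = (c xb / d) * a j0 x - S * (a j0 x / d)"
          by (simp add: diff_divide_distrib left_diff_distrib)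
        ultimately show ?thesis by simp
      qed
      finally show ?thesis using insert.hyps e1 by simp
    qed
    moreover have "\<forall>j\<in>insert j0 J. l j \<ge> 0"
      using lpos m(1) by (auto simp: l_def)
    ultimately show ?thesis by blast
  qed
qed


datatype idx = Pos nat nat | Tp | SE nat | PW nat

definition hse :: "nat \<Rightarrow> nat \<Rightarrow> (nat \<Rightarrow> nat \<Rightarrow> real) \<Rightarrow> (nat \<Rightarrow> nat \<Rightarrow> real) \<Rightarrow> real
   \<Rightarrow> (nat \<Rightarrow> nat \<Rightarrow> real) \<Rightarrow> real \<Rightarrow> nat \<Rightarrow> real" where
  "hse L K c b sDL r t k = (\<Sum>t'<K. \<Sum>i<L. c i k * r i t') - (\<Sum>i<L. b i k * r i k) + t * sDL"

definition hpw :: "nat \<Rightarrow> (nat \<Rightarrow> real) \<Rightarrow> (nat \<Rightarrow> nat \<Rightarrow> real) \<Rightarrow> real \<Rightarrow> nat \<Rightarrow> real" where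
  "hpw K Pmax r t i = (\<Sum>t'<K. r i t') - t * Pmax i"

definition cmb :: "(nat \<Rightarrow> nat \<Rightarrow> real) \<times> real \<Rightarrow> real \<Rightarrow> (nat \<Rightarrow> nat \<Rightarrow> real) \<times> real \<Rightarrow> (nat \<Rightarrow> nat \<Rightarrow> real) \<times> real" where
  "cmb x s y = (\<lambda>i k. fst x i k + s * fst y i k, snd x + s * snd y)"

lemma hse_lin: "hse L K c b sDL (\<lambda>i k. r i k + s * r' i k) (t + s * t') k =
   hse L K c b sDL r t k + s * hse L K c b sDL r' t' k"
  unfolding hse_def by (simp add: algebra_simps sum.distrib sum_distrib_left)

lemma hpw_lin: "hpw K Pmax (\<lambda>i k. r i k + s * r' i k) (t + s * t') i =
   hpw K Pmax r t i + s * hpw K Pmax r' t' i"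
  unfolding hpw_def by (simp add: algebra_simps sum.distrib sum_distrib_left)

lemma obj_lin: "objective L K (\<lambda>i k. r i k + s * r' i k) = objective L K r + s * objective L K r'"
  unfolding objective_def by (simp add: algebra_simps sum.distrib sum_distrib_left)

lemma main_general:
  fixes c b rho :: "nat \<Rightarrow> nat \<Rightarrow> real" and lam mu Pmax :: "nat \<Rightarrow> real"
  assumes bpos: "\<forall>i<L. \<forall>t<K. b i t > 0"
    and opt: "optimal_solution L K c b sDL Pmax rho"
    and mult: "optimal_multipliers L K c b sDL Pmax lam mu"
  shows "\<forall>t<K. \<forall>i<L. rho i t > 0 \<longrightarrow> i \<in> S_set L K c b lam mu t"
proof -
  define pstar where "pstar = objective L K rho"
  define D where "D = {r :: nat \<Rightarrow> nat \<Rightarrow> real. \<forall>i<L. \<forall>t<K. r i t \<ge> 0}"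
  have feas: "feasible L K c b sDL Pmax rho" using opt by (simp add: optimal_solution_def)
  have rhoD: "rho \<in> D" using feas by (simp add: feasible_def D_def)
  define a where "a = (\<lambda>j (x :: (nat \<Rightarrow> nat \<Rightarrow> real) \<times> real). case j of
      Pos i k \<Rightarrow> fst x i k | Tp \<Rightarrow> snd x
    | SE k \<Rightarrow> - hse L K c b sDL (fst x) (snd x) k | PW i \<Rightarrow> - hpw K Pmax (fst x) (snd x) i)"
  define c0 where "c0 = (\<lambda>x :: (nat \<Rightarrow> nat \<Rightarrow> real) \<times> real. objective L K (fst x) - pstar * snd x)"
  define J1 where "J1 = (\<lambda>(i,k). Pos i k) ` ({..<L} \<times> {..<K}) \<union> {Tp}"
  define J2 where "J2 = SE ` {..<K} \<union> PW ` {..<L}"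
  define J where "J = J1 \<union> J2"
  have fJ1: "finite J1" and fJ2: "finite J2" unfolding J1_def J2_def by auto
  have dJ: "J1 \<inter> J2 = {}" unfolding J1_def J2_def by auto
  have fJ: "finite J" unfolding J_def using fJ1 fJ2 by auto
  have lin_a: "\<forall>j\<in>J. lin cmb (a j)"
  proof
    fix j show "lin cmb (a j)"
      unfolding lin_def cmb_def a_def
      by (cases j) (simp_all add: hse_lin hpw_lin algebra_simps)
  qed
  have lin_c: "lin cmb c0" unfolding lin_def cmb_def c0_def by (simp add: obj_lin algebra_simps)
  have prem: "\<forall>x. (\<forall>j\<in>J. a j x \<ge> 0) \<longrightarrow> c0 x \<ge> 0"
  proof (intro allI impI)
    fix x assume H: "\<forall>j\<in>J. a j x \<ge> 0"
    obtain r t where x: "x = (r, t)" by fastforce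
    have rpos: "\<forall>i<L. \<forall>k<K. r i k \<ge> 0"
    proof (intro allI impI)
      fix i k assume "i < L" "k < K"
      then have "Pos i k \<in> J" unfolding J_def J1_def by auto
      then show "r i k \<ge> 0" using H x a_def by fastforce
    qed
    have "Tp \<in> J" unfolding J_def J1_def by auto
    then have tpos: "t \<ge> 0" using H x a_def by fastforce
    have hs: "\<forall>k<K. hse L K c b sDL r t k \<le> 0"
    proof (intro allI impI)
      fix k assume "k < K"
      then have "SE k \<in> J" unfolding J_def J2_def by auto
      then show "hse L K c b sDL r t k \<le> 0" using H x a_def by fastforce
    qed
    have hp: "\<forall>i<L. hpw K Pmax r t i \<le> 0"
    proof (intro allI impI)
      fix i assume "i < L"
      then have "PW i \<in> J" unfolding J_def J2_def by auto
      then show "hpw K Pmax r t i \<le> 0" using H x a_def by fastforce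
    qed
    have objpos: "objective L K r \<ge> 0" unfolding objective_def using rpos
      by (auto intro!: sum_nonneg)
    show "c0 x \<ge> 0"
    proof (cases "t = 0")
      case True
      then show ?thesis using objpos x c0_def by simp
    next
      case False
      then have tp: "t > 0" using tpos by simp
      define r' where "r' = (\<lambda>i k. (1/t) * r i k)"
      have "feasible L K c b sDL Pmax r'"
        unfolding feasible_def
      proof (intro conjI allI impI)
        fix i k assume "i < L" "k < K"
        then show "r' i k \<ge> 0" using rpos tp unfolding r'_def by simp
      next
        fix k assume k: "k < K"
        have "se_constr L K c b sDL r' k = (1/t) * hse L K c b sDL r t k"
          unfolding se_constr_def hse_def r'_def using tp
          by (simp add: sum_distrib_left algebra_simps)
        then show "se_constr L K c b sDL r' k \<le> 0" using hs k tp
          by (simp add: divide_nonpos_pos)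
      next
        fix i assume i: "i < L"
        have "pow_constr K Pmax r' i = (1/t) * hpw K Pmax r t i"
          unfolding pow_constr_def hpw_def r'_def using tp
          by (simp add: sum_distrib_left algebra_simps)
        then show "pow_constr K Pmax r' i \<le> 0" using hp i tp
          by (simp add: divide_nonpos_pos)
      qed
      then have "objective L K r' \<ge> pstar" using opt unfolding optimal_solution_def pstar_def by blast
      moreover have "objective L K r' = (1/t) * objective L K r"
        unfolding objective_def r'_def by (simp add: sum_distrib_left)
      ultimately have "pstar * t \<le> objective L K r" using tp by (simp add: field_simps)
      then show ?thesis using x c0_def by (simp add: mult.commute)
    qed
  qed
  obtain l where l: "\<forall>j\<in>J. l j \<ge> 0" "\<forall>x. c0 x = (\<Sum>j\<in>J. l j * a j x)"
    using farkas_gen[OF fJ lin_a lin_c prem] by blast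
  define lam' where "lam' = (\<lambda>k. l (SE k))"
  define mu' where "mu' = (\<lambda>i. l (PW i))"
  have lam'pos: "\<forall>k<K. lam' k \<ge> 0" using l(1) unfolding lam'_def J_def J2_def by auto
  have mu'pos: "\<forall>i<L. mu' i \<ge> 0" using l(1) unfolding mu'_def J_def J2_def by auto
  have lag': "lagrangian L K c b sDL Pmax r lam' mu' \<ge> pstar" if rD: "r \<in> D" for r
  proof -
    have s1: "(\<Sum>j\<in>J1. l j * a j (r, 1)) \<ge> 0"
    proof (rule sum_nonneg)
      fix j assume j: "j \<in> J1"
      then have "l j \<ge> 0" using l(1) J_def by auto
      moreover have "a j (r, 1) \<ge> 0" using j rD unfolding J1_def D_def a_def by auto
      ultimately show "l j * a j (r, 1) \<ge> 0" by simp
    qed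
    have aSE: "a (SE k) (r,1) = - se_constr L K c b sDL r k" for k
      unfolding a_def hse_def se_constr_def by simp
    have aPW: "a (PW i) (r,1) = - pow_constr K Pmax r i" for i
      unfolding a_def hpw_def pow_constr_def by simp
    have inj1: "inj_on SE {..<K}" and inj2: "inj_on PW {..<L}" by (auto simp: inj_on_def)
    have s2: "(\<Sum>j\<in>J2. l j * a j (r, 1)) =
        - (\<Sum>k<K. lam' k * se_constr L K c b sDL r k) - (\<Sum>i<L. mu' i * pow_constr K Pmax r i)"
    proof -
      have "(\<Sum>j\<in>J2. l j * a j (r, 1)) = (\<Sum>j\<in>SE ` {..<K}. l j * a j (r, 1)) + (\<Sum>j\<in>PW ` {..<L}. l j * a j (r, 1))"
        unfolding J2_def by (rule sum.union_disjoint) auto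
      also have "(\<Sum>j\<in>SE ` {..<K}. l j * a j (r, 1)) = (\<Sum>k<K. l (SE k) * a (SE k) (r, 1))"
        by (rule sum.reindex[OF inj1, unfolded comp_def])
      also have "(\<Sum>j\<in>PW ` {..<L}. l j * a j (r, 1)) = (\<Sum>i<L. l (PW i) * a (PW i) (r, 1))"
        by (rule sum.reindex[OF inj2, unfolded comp_def])
      finally show ?thesis
        by (simp add: aSE aPW lam'_def mu'_def sum_negf)
    qed
    have "c0 (r, 1) = (\<Sum>j\<in>J1. l j * a j (r, 1)) + (\<Sum>j\<in>J2. l j * a j (r, 1))"
      using l(2) unfolding J_def by (simp add: sum.union_disjoint[OF fJ1 fJ2 dJ])
    then show ?thesis using s1 s2 unfolding c0_def lagrangian_def by simp
  qed
  have d1: "dual_fun L K c b sDL Pmax lam' mu' \<ge> ereal pstar"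
    unfolding dual_fun_def by (rule INF_greatest) (use lag' D_def in auto)
  have d2: "dual_fun L K c b sDL Pmax lam mu \<ge> dual_fun L K c b sDL Pmax lam' mu'"
    using mult lam'pos mu'pos unfolding optimal_multipliers_def by blast
  have lamp: "\<forall>k<K. lam k \<ge> 0" and mup: "\<forall>i<L. mu i \<ge> 0" using mult by (auto simp: optimal_multipliers_def)
  have lagge: "lagrangian L K c b sDL Pmax r lam mu \<ge> pstar" if "r \<in> D" for r
  proof -
    have "ereal (lagrangian L K c b sDL Pmax r lam mu) \<ge> dual_fun L K c b sDL Pmax lam mu"
      unfolding dual_fun_def by (rule INF_lower) (use that D_def in auto)
    then show ?thesis using d1 d2 by (metis ereal_less_eq(3) order.trans)
  qed
  have lagrho: "lagrangian L K c b sDL Pmax rho lam mu \<le> pstar"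
  proof -
    have "(\<Sum>k<K. lam k * se_constr L K c b sDL rho k) \<le> 0"
      using feas lamp by (auto simp: feasible_def intro!: sum_nonpos mult_nonneg_nonpos)
    moreover have "(\<Sum>i<L. mu i * pow_constr K Pmax rho i) \<le> 0"
      using feas mup by (auto simp: feasible_def intro!: sum_nonpos mult_nonneg_nonpos)
    ultimately show ?thesis unfolding lagrangian_def pstar_def by simp
  qed
  define f where "f = cf K c b lam mu"
  define upd where "upd = (\<lambda>j t0 s i t. if i = j \<and> t = t0 then rho i t + s else rho i t)"
  have lupd: "lagrangian L K c b sDL Pmax (upd j t0 s) lam mu = lagrangian L K c b sDL Pmax rho lam mu + s * f j t0"
    if "j < L" "t0 < K" for j t0 s
    unfolding lagr_affine upd_def f_def using update_sum[OF that] by simp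
  have fnn: "f j t0 \<ge> 0" if "j < L" "t0 < K" for j t0
  proof -
    have "upd j t0 1 \<in> D" using rhoD unfolding D_def upd_def by auto
    then show ?thesis using lagge lagrho lupd[OF that, of 1] by fastforce
  qed
  have f0: "f i t0 = 0" if "i < L" "t0 < K" "rho i t0 > 0" for i t0
  proof -
    have "upd i t0 (- rho i t0) \<in> D" using rhoD unfolding D_def upd_def by auto
    then have "0 \<le> - rho i t0 * f i t0" using lagge lagrho lupd[OF that(1,2), of "- rho i t0"] by fastforce
    then have "f i t0 \<le> 0" using that(3) by (simp add: mult_le_0_iff)
    then show ?thesis using fnn[OF that(1,2)] by simp
  qed
  show ?thesis
  proof (intro allI impI)
    fix t i assume t: "t < K" and i: "i < L" and pos: "rho i t > 0"
    have eqi: "1 + (\<Sum>k<K. lam k * c i k) + mu i = lam t * b i t"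
      using f0[OF i t pos] unfolding f_def cf_def by simp
    have bi: "b i t > 0" using bpos i t by simp
    have fi: "(1 + (\<Sum>k<K. lam k * c i k) + mu i) * (1 / b i t) = lam t"
      using eqi bi by simp
    have "lam t \<le> (1 + (\<Sum>k<K. lam k * c j k) + mu j) * (1 / b j t)" if j: "j < L" for j
    proof -
      have "lam t * b j t \<le> 1 + (\<Sum>k<K. lam k * c j k) + mu j"
        using fnn[OF j t] unfolding f_def cf_def by simp
      moreover have "b j t > 0" using bpos j t by simp
      ultimately show ?thesis by (simp add: pos_le_divide_eq)
    qed
    then show "i \<in> S_set L K c b lam mu t"
      unfolding S_set_def Let_def using i fi by auto
  qed
qed


lemma xi_hat_pos:
  assumes "0 < tau_p" "tau_p < tau_c" "xi > 0"
  shows "xi_hat tau_c tau_p xi > 0"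
proof -
  have "xi * tau_c / (tau_c - tau_p) > 0" using assms by (simp add: divide_pos_pos)
  then have "(2::real) powr 0 < 2 powr (xi * tau_c / (tau_c - tau_p))"
    by (intro powr_less_mono) auto
  then show ?thesis unfolding xi_hat_def by simp
qed

lemma bp:
  assumes "M > 0" "0 < tau_p" "tau_p < tau_c" "beta i t > 0" "p t > 0" "xi t > 0" "sUL > 0"
  shows "coef_b M tau_p p tau_c sUL xi beta i t > 0"
proof -
    have bt: "beta i t > 0" and pt: "p t > 0" and xt: "xi t > 0" using assms by auto
    have x: "xi_hat tau_c tau_p (xi t) > 0" using xi_hat_pos assms xt by blast
    have n: "real M * p t * tau_p * (beta i t)\<^sup>2 > 0" using assms bt pt by simp
    have d: "p t * tau_p * beta i t + sUL > 0" using assms bt pt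
      by (simp add: add_pos_pos)
    show "coef_b M tau_p p tau_c sUL xi beta i t > 0"
      unfolding coef_b_def using n d x by simp
qed

theorem theorem3:
  fixes L K M :: nat
    and tau_p tau_c sUL sDL :: real
    and beta :: "nat \<Rightarrow> nat \<Rightarrow> real"
    and p xi Pmax :: "nat \<Rightarrow> real"
    and rho :: "nat \<Rightarrow> nat \<Rightarrow> real"
    and lam mu :: "nat \<Rightarrow> real"
  assumes "L > 0" "K > 0" "M > 0"
    and "0 < tau_p" "tau_p < tau_c"
    and "\<forall>i<L. \<forall>k<K. beta i k > 0"
    and "\<forall>k<K. p k > 0"
    and "sUL > 0" "sDL > 0"
    and "\<forall>i<L. Pmax i > 0"
    and "\<forall>k<K. xi k > 0"
    and "\<exists>r. feasible L K beta (coef_b M tau_p p tau_c sUL xi beta) sDL Pmax r"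
    and "optimal_solution L K beta (coef_b M tau_p p tau_c sUL xi beta) sDL Pmax rho"
    and "optimal_multipliers L K beta (coef_b M tau_p p tau_c sUL xi beta) sDL Pmax lam mu"
  shows "\<forall>t<K. \<forall>i<L. rho i t > 0 \<longrightarrow>
           i \<in> S_set L K beta (coef_b M tau_p p tau_c sUL xi beta) lam mu t"
proof -
  have bpos: "\<forall>i<L. \<forall>t<K. coef_b M tau_p p tau_c sUL xi beta i t > 0"
  proof (intro allI impI)
    fix i t assume i: "i < L" and t: "t < K"
    have b1: "beta i t > 0" using assms(6) i t by blast
    have b2: "p t > 0" using assms(7) t by blast
    have b3: "xi t > 0" using assms(11) t by blast
    show "coef_b M tau_p p tau_c sUL xi beta i t > 0"
      using bp assms(3) assms(4) assms(5) b1 b2 b3 assms(8) by blast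
  qed
  show ?thesis by (rule main_general[OF bpos assms(13) assms(14)])
qed

end
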